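(* Let $n\ge1$ and $0\le j\le n$. Then \[ \sum_{m=1}^\infty\frac{e_j(m)h_{n-j}(m)}{m^2}=\begin{cases}(n+1)\zeta(n+2), & j=0,\\ \displaystyle\sum_{p=j}^n\binom{p-1}{j-1}S^T_{n+2,p}+\binom{n+1}{j+1}\zeta(n+2), & j\ge1.\end{cases} \]
   Context: For a symmetric function $u$ and $m\ge1$, $u(m)$ denotes $u$ evaluated at $x_r=1/r$ for $r\le m$ and $x_r=0$ for $r>m$; $e_j$, $h_i$ are the elementary and complete symmetric functions. Equivalently $e_j(m)=P_j(H_m,\dots,H_m^{(j)})$ and $h_i(m)=Q_i(H_m,\dots,H_m^{(i)})$ with $H_m^{(r)}=\sum_{t=1}^m t^{-r}$. Multiple zeta values: $\zeta(a_1,\dots,a_k)=\sum_{n_1>\cdots>n_k\ge1}n_1^{-a_1}\cdots n_k^{-a_k}$ for positive integers with $a_1\ge2$; weight is $a_1+\dots+a_k$, depth is $k$. For $N\ge2$ and $1\le k<N$, $S^T_{N,k}$ denotes the sum of all multiple zeta values $\zeta(a_1,\dots,a_k)$ of weight $N$ and depth $k$ with $a_1\ge3$. *)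

theory Defs
  imports "HOL-Analysis.Analysis" "HOL-Library.Multiset"
begin

text \<open>e_j(m): elementary symmetric function e_j evaluated at x_r = 1/r (r \<le> m), x_r = 0 (r > m).\<close>
definition esym :: "nat \<Rightarrow> nat \<Rightarrow> real" where
  "esym j m = (\<Sum>S\<in>{S. S \<subseteq> {1..m} \<and> card S = j}. \<Prod>r\<in>S. 1 / real r)"

text \<open>h_i(m): complete homogeneous symmetric function h_i at the same point.\<close>
definition hsym :: "nat \<Rightarrow> nat \<Rightarrow> real" where
  "hsym i m = (\<Sum>M\<in>{M. set_mset M \<subseteq> {1..m} \<and> size M = i}.
                 \<Prod>r\<in>#M. 1 / real r)"

definition mzv :: "nat list \<Rightarrow> real" where
  "mzv a = infsum (\<lambda>ns. \<Prod>i<length a. 1 / real (ns ! i) ^ (a ! i))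
      {ns. length ns = length a \<and> sorted_wrt (>) ns \<and> (\<forall>x\<in>set ns. x \<ge> 1)}"

definition ST :: "nat \<Rightarrow> nat \<Rightarrow> real" where
  "ST N k = (\<Sum>a\<in>{a. length a = k \<and> (\<forall>x\<in>set a. x \<ge> 1) \<and> sum_list a = N \<and> a \<noteq> [] \<and> hd a \<ge> 3}.
               mzv a)"

end

theory Submission
  imports Defs "HOL-Real_Asymp.Real_Asymp"
begin


lemma has_sum_Sigma_nonneg:
  fixes f :: "'a \<times> 'b \<Rightarrow> real"
  assumes "\<And>a b. a \<in> A \<Longrightarrow> b \<in> B a \<Longrightarrow> f (a, b) \<ge> 0"
    and "\<And>a. a \<in> A \<Longrightarrow> ((\<lambda>b. f (a, b)) has_sum g a) (B a)"
    and "(g has_sum S) A"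
  shows "(f has_sum S) (Sigma A B)"
proof -
  have g: "g summable_on A" using assms(3) by (rule has_sum_imp_summable)
  have s: "f summable_on Sigma A B"
    by (rule summable_on_SigmaI[where g=g, OF assms(2) g assms(1)])
  show ?thesis by (rule has_sum_SigmaI[where g=g, OF assms(2) assms(3) s])
qed

lemma sums_shift_has_sum:
  fixes f :: "nat \<Rightarrow> real"
  assumes "(\<lambda>k. f (k + a)) sums s" "\<And>n. n \<ge> a \<Longrightarrow> f n \<ge> 0"
  shows "(f has_sum s) {a..}"
proof -
  have "((\<lambda>k. f (k + a)) has_sum s) UNIV"
    by (rule sums_nonneg_imp_has_sum[OF assms(1)]) (use assms(2) in auto)
  moreover have "bij_betw (\<lambda>k. k + a) UNIV {a..}"
    by (rule bij_betwI[where g="\<lambda>n. n - a"]) auto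
  ultimately show ?thesis using has_sum_reindex_bij_betw by blast
qed

lemma tele_aux1:
  fixes a m c :: real
  assumes "a > 0" "m > 0"
  shows "(c - c * (a / (a + m))) / m = c * (a / (a + m)) / a"
proof -
  have am: "a + m > 0" using assms by simp
  have h: "c - c * (a / (a + m)) = c * m / (a + m)" using am by (simp add: field_simps)
  have e1: "(c * m / (a + m)) / m = c / (a + m)" using assms by simp
  have e2: "c * (a / (a + m)) / a = c / (a + m)" using assms by simp
  show ?thesis by (subst h, subst e1, subst e2) (rule refl)
qed

lemma tele_aux2:
  fixes b n C :: real
  assumes "b > 0" "n > 0"
  shows "(C * (n + b) / b - C) / n = C / b"
  using assms by (simp add: field_simps)

section \<open>The connector\<close>

definition Cn :: "real \<Rightarrow> nat \<Rightarrow> nat \<Rightarrow> real" where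
  "Cn x n m = (\<Prod>i=1..n. (real i - x) / (real i - x + real m))"

fun Ek :: "real \<Rightarrow> nat \<Rightarrow> nat \<Rightarrow> real" where
  "Ek x 0 n = 1"
| "Ek x (Suc k) n = (\<Sum>l\<in>{1..<n}. Ek x k l / (real l - x))"

context
  fixes x :: real
  assumes x0: "0 \<le> x" and xh: "x \<le> 1/2"
begin

lemma x1: "x < 1" using xh by simp

lemma Cn_0 [simp]: "Cn x 0 m = 1"
  by (simp add: Cn_def)

lemma Cn_m0 [simp]: "Cn x n 0 = 1"
proof -
  have "\<And>i. i \<in> {1..n} \<Longrightarrow> (real i - x) / (real i - x) = 1" using x1 by auto
  then show ?thesis unfolding Cn_def by simp
qed

lemma Cn_Suc: "Cn x (Suc n) m = Cn x n m * ((real (Suc n) - x) / (real (Suc n) - x + real m))"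
  unfolding Cn_def by (simp add: prod.nat_ivl_Suc')

lemma Cn_nonneg: "0 \<le> Cn x n m"
  unfolding Cn_def using x1 by (intro prod_nonneg) auto

lemma factor_le1: "i \<ge> 1 \<Longrightarrow> (real i - x) / (real i - x + real m) \<le> 1"
  using x1 by (auto simp: divide_le_eq_1)

lemma Cn_decr: "Cn x (Suc n) m \<le> Cn x n m"
proof -
  have "Cn x n m * ((real (Suc n) - x) / (real (Suc n) - x + real m)) \<le> Cn x n m * 1"
    by (intro mult_left_mono factor_le1 Cn_nonneg) auto
  then show ?thesis by (simp add: Cn_Suc)
qed

lemma Cn_le1: "n \<ge> 1 \<Longrightarrow> Cn x n m \<le> Cn x 1 m"
proof (induction n rule: dec_induct)
  case base then show ?case by simp
next
  case (step n) then show ?case using Cn_decr[of n m] by linarith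
qed

lemma Cn_1m: "Cn x 1 m = (1 - x) / (1 - x + real m)"
  by (simp add: Cn_def)

lemma Cn_n1: "Cn x n 1 = (1 - x) / (real n + 1 - x)"
proof (induction n)
  case 0 then show ?case using x1 by simp
next
  case (Suc n)
  have p: "real n + 1 - x > 0" "real n + 2 - x > 0" using x0 x1 by auto
  have e: "Cn x (Suc n) 1 = Cn x n 1 * ((real n + 1 - x) / (real n + 1 - x + 1))"
    by (simp add: Cn_Suc)
  define a where "a = real n + 1 - x"
  have a0: "a > 0" "a + 1 > 0" using p by (auto simp: a_def)
  have "Cn x (Suc n) 1 = (1 - x) / a * (a / (a + 1))"
    unfolding e Suc.IH a_def by simp
  also have "\<dots> = (1 - x) / (a + 1)" using a0 by simp
  finally show ?case by (simp add: a_def)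
qed

lemma Cn_le_Cn1: "m \<ge> 1 \<Longrightarrow> Cn x n m \<le> Cn x n 1"
  unfolding Cn_def
proof (intro prod_mono conjI)
  fix i assume "m \<ge> 1" "i \<in> {1..n}"
  then show "0 \<le> (real i - x) / (real i - x + real m)" using x1 by auto
  show "(real i - x) / (real i - x + real m) \<le> (real i - x) / (real i - x + real 1)"
    using \<open>m \<ge> 1\<close> \<open>i \<in> {1..n}\<close> x1 by (intro divide_left_mono) auto
qed

lemma Cn_lim_n: assumes "m \<ge> 1" shows "(\<lambda>n. Cn x n m) \<longlonglongrightarrow> 0"
proof (rule tendsto_sandwich[where f="\<lambda>_. 0" and h="\<lambda>n. (1 - x) / (real n + 1 - x)"])
  show "\<forall>\<^sub>F n in sequentially. 0 \<le> Cn x n m" using Cn_nonneg by simp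
  show "\<forall>\<^sub>F n in sequentially. Cn x n m \<le> (1 - x) / (real n + 1 - x)"
    using Cn_le_Cn1[OF assms] Cn_n1 by simp
  show "(\<lambda>n. (1 - x) / (real n + 1 - x)) \<longlonglongrightarrow> 0"
    by real_asymp
qed simp

lemma Cn_lim_m: assumes "n \<ge> 1" shows "(\<lambda>m. Cn x n m) \<longlonglongrightarrow> 0"
proof (rule tendsto_sandwich[where f="\<lambda>_. 0" and h="\<lambda>m. (1 - x) / (1 - x + real m)"])
  show "\<forall>\<^sub>F m in sequentially. 0 \<le> Cn x n m" using Cn_nonneg by simp
  show "\<forall>\<^sub>F m in sequentially. Cn x n m \<le> (1 - x) / (1 - x + real m)"
    using Cn_le1[OF assms] Cn_1m by simp
  show "(\<lambda>m. (1 - x) / (1 - x + real m)) \<longlonglongrightarrow> 0"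
    by real_asymp
qed simp

lemma Cn_mrel: "Cn x n m * (real m + 1 - x) = Cn x n (Suc m) * (real n + real m + 1 - x)"
proof (induction n)
  case 0 then show ?case by simp
next
  case (Suc n)
  have p: "real n + 1 - x > 0" "real n + real m + 1 - x > 0" "real n + real m + 2 - x > 0"
    using x0 x1 by auto
  have "Cn x (Suc n) m * (real m + 1 - x)
      = Cn x n m * (real m + 1 - x) * ((real n + 1 - x) / (real n + 1 - x + real m))"
    by (simp only: Cn_Suc of_nat_Suc) (simp add: mult_ac add_ac)
  also have "\<dots> = Cn x n (Suc m) * (real n + real m + 1 - x) * ((real n + 1 - x) / (real n + 1 - x + real m))"
    by (simp add: Suc)
  also have "\<dots> = Cn x n (Suc m) * (real n + 1 - x)"
    using p by (simp add: field_simps)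
  also have "\<dots> = Cn x (Suc n) (Suc m) * (real (Suc n) + real m + 1 - x)"
  proof -
    have e: "Cn x (Suc n) (Suc m) = Cn x n (Suc m) * ((real n + 1 - x) / (real n + real m + 2 - x))"
      by (simp add: Cn_Suc add_ac)
    show ?thesis unfolding e using p by (simp add: field_simps)
  qed
  finally show ?case .
qed

lemma T1: assumes "m \<ge> 1"
  shows "((\<lambda>n. Cn x n m / (real n - x)) has_sum (Cn x l m / real m)) {Suc l..}"
proof (rule sums_shift_has_sum)
  define f where "f k = - Cn x (k + l) m / real m" for k
  have "(\<lambda>k. f (Suc k) - f k) sums (0 - f 0)"
  proof (rule telescope_sums)
    have "(\<lambda>k. Cn x (k + l) m) \<longlonglongrightarrow> 0"
      using Cn_lim_n[OF assms] by (rule LIMSEQ_ignore_initial_segment)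
    then have L2: "(\<lambda>k. - Cn x (k + l) m) \<longlonglongrightarrow> 0"
      using tendsto_minus by fastforce
    show "f \<longlonglongrightarrow> 0" unfolding f_def
      using tendsto_divide_zero[OF L2, of "real m"] by simp
  qed
  moreover have "f (Suc k) - f k = Cn x (k + Suc l) m / (real (k + Suc l) - x)" for k
  proof -
    define a where "a = real (Suc (k + l)) - x"
    define c where "c = Cn x (k + l) m"
    have p: "a > 0" using x0 x1 by (auto simp: a_def)
    have e: "Cn x (Suc (k + l)) m = c * (a / (a + real m))"
      by (simp add: Cn_Suc a_def c_def)
    have "f (Suc k) - f k = (c - Cn x (Suc (k + l)) m) / real m"
      unfolding f_def c_def by (simp add: diff_divide_distrib)
    also have "\<dots> = Cn x (Suc (k + l)) m / a"
      unfolding e using p assms by (intro tele_aux1) auto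
    finally show ?thesis by (simp add: a_def)
  qed
  ultimately show "(\<lambda>k. Cn x (k + Suc l) m / (real (k + Suc l) - x)) sums (Cn x l m / real m)"
    by (simp add: f_def)
  show "\<And>n. Suc l \<le> n \<Longrightarrow> 0 \<le> Cn x n m / (real n - x)"
    using Cn_nonneg x1 by auto
qed

lemma T2: assumes "n \<ge> 1"
  shows "((\<lambda>m. Cn x n m / (real m - x)) has_sum (1 / real n)) {1..}"
proof (rule sums_shift_has_sum)
  define f where "f k = - Cn x n k / real n" for k
  have "(\<lambda>k. f (Suc k) - f k) sums (0 - f 0)"
  proof (rule telescope_sums)
    have L2: "(\<lambda>k. - Cn x n k) \<longlonglongrightarrow> 0"
      using tendsto_minus[OF Cn_lim_m[OF assms]] by fastforce
    show "f \<longlonglongrightarrow> 0" unfolding f_def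
      using tendsto_divide_zero[OF L2, of "real n"] by simp
  qed
  moreover have "f (Suc k) - f k = Cn x n (k + 1) / (real (k + 1) - x)" for k
  proof -
    define b where "b = real k + 1 - x"
    have p: "b > 0" "real n + real k + 1 - x > 0" using x0 x1 by (auto simp: b_def)
    have r: "Cn x n k = Cn x n (Suc k) * (real n + b) / b"
      using Cn_mrel[of n k] p by (simp add: b_def field_simps)
    have "f (Suc k) - f k = (Cn x n k - Cn x n (Suc k)) / real n"
      unfolding f_def by (simp add: diff_divide_distrib)
    also have "\<dots> = Cn x n (Suc k) / b"
      unfolding r using p assms by (intro tele_aux2) auto
    finally show ?thesis by (simp add: b_def)
  qed
  ultimately show "(\<lambda>k. Cn x n (k + 1) / (real (k + 1) - x)) sums (1 / real n)"
    by (simp add: f_def)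
  show "\<And>m. 1 \<le> m \<Longrightarrow> 0 \<le> Cn x n m / (real m - x)"
    using Cn_nonneg x1 by auto
qed

lemma Ek_nonneg: "0 \<le> Ek x k n"
proof (induction k arbitrary: n)
  case 0 then show ?case by simp
next
  case (Suc k) then show ?case using x1 by (auto intro!: sum_nonneg divide_nonneg_pos)
qed

lemma Kk: assumes "m \<ge> 1"
  shows "((\<lambda>n. Ek x k n * Cn x n m / (real n - x)) has_sum (1 / real m ^ (k + 1))) {1..}"
proof (induction k)
  case 0
  show ?case using T1[OF assms, of 0] by simp
next
  case (Suc k)
  define f where "f = (\<lambda>(l, n). Ek x k l / (real l - x) * (Cn x n m / (real n - x)))"
  have "(f has_sum (1 / real m ^ (Suc k + 1))) (SIGMA l:{1..}. {Suc l..})"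
  proof (rule has_sum_Sigma_nonneg)
    show "f (l, n) \<ge> 0" if "l \<in> {1..}" "n \<in> {Suc l..}" for l n
      using that x1 Cn_nonneg Ek_nonneg by (auto simp: f_def)
    show "((\<lambda>n. f (l, n)) has_sum (Ek x k l / (real l - x) * (Cn x l m / real m))) {Suc l..}"
      if "l \<in> {1..}" for l
      by (simp only: f_def prod.case) (rule has_sum_cmult_right[OF T1[OF assms]])
    have "((\<lambda>l. (Ek x k l * Cn x l m / (real l - x)) * (1 / real m)) has_sum
             (1 / real m ^ (k + 1) * (1 / real m))) {1..}"
      by (rule has_sum_cmult_left[OF Suc])
    then show "((\<lambda>l. Ek x k l / (real l - x) * (Cn x l m / real m)) has_sum (1 / real m ^ (Suc k + 1))) {1..}"
      by (simp add: field_simps)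
  qed
  then have "((\<lambda>(n, l). f (l, n)) has_sum (1 / real m ^ (Suc k + 1))) (SIGMA n:{1..}. {1..<n})"
  proof (subst has_sum_reindex_bij_witness[where i="\<lambda>(l,n). (n,l)" and j="\<lambda>(n,l). (l,n)"
          and T="SIGMA l:{1..}. {Suc l..}" and h=f])
  qed auto
  then have "((\<lambda>n. \<Sum>l\<in>{1..<n}. f (l, n)) has_sum (1 / real m ^ (Suc k + 1))) {1..}"
    by (rule has_sum_SigmaD) auto
  moreover have "(\<Sum>l\<in>{1..<n}. f (l, n)) = Ek x (Suc k) n * Cn x n m / (real n - x)" for n
  proof -
    have "Ek x (Suc k) n * Cn x n m / (real n - x)
        = (\<Sum>l\<in>{1..<n}. Ek x k l / (real l - x)) * (Cn x n m / (real n - x))" by simp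
    also have "\<dots> = (\<Sum>l\<in>{1..<n}. f (l, n))"
      by (simp only: f_def prod.case sum_distrib_right)
    finally show ?thesis by simp
  qed
  ultimately show ?case by simp
qed

lemma g_summable: assumes "d \<ge> 1"
  shows "(\<lambda>m. 1 / (real m ^ d * (real m - x))) summable_on {1..}"
proof -
  define g where "g m = 1 / (real m ^ d * (real m - x))" for m
  have bound: "norm (g m) \<le> 2 * inverse (real m ^ 2)" if "m \<ge> 1" for m
  proof -
    have a: "real m - x \<ge> real m / 2" using that xh by auto
    have "real m ^ 1 \<le> real m ^ d"
      by (rule power_increasing) (use that assms in auto)
    then have b: "real m ^ d \<ge> real m" by simp
    have "real m ^ d * (real m - x) \<ge> real m * (real m / 2)"
      using a b that by (intro mult_mono) auto
    moreover have "real m * (real m / 2) > 0" using that by auto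
    ultimately have "1 / (real m ^ d * (real m - x)) \<le> 1 / (real m * (real m / 2))"
      by (intro divide_left_mono) auto
    moreover have "1 / (real m ^ d * (real m - x)) \<ge> 0" using x1 that by auto
    ultimately show ?thesis by (simp add: g_def power2_eq_square field_simps)
  qed
  have gsum: "g summable_on {1..}"
  proof -
    have "summable (\<lambda>m. inverse (real m ^ 2))" by (rule inverse_power_summable) simp
    then have "summable (\<lambda>m. 2 * inverse (real m ^ 2))" by (rule summable_mult)
    then have s2: "summable (\<lambda>m. 2 * inverse (real (m + 1) ^ 2))"
      by (rule summable_ignore_initial_segment)
    have "summable (\<lambda>m. g (m + 1))"
    proof (rule summable_comparison_test[OF _ s2])
      show "\<exists>N. \<forall>n\<ge>N. norm (g (n + 1)) \<le> 2 * inverse (real (n + 1) ^ 2)"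
      proof (intro exI allI impI)
        fix n :: nat
        show "norm (g (n + 1)) \<le> 2 * inverse (real (n + 1) ^ 2)" by (rule bound) simp
      qed
    qed
    then have "(\<lambda>m. g (m + 1)) summable_on UNIV"
      by (rule summable_nonneg_imp_summable_on) (use x1 in \<open>auto simp: g_def\<close>)
    moreover have "bij_betw (\<lambda>k. k + 1) UNIV {1::nat..}"
      by (rule bij_betwI[where g="\<lambda>n. n - 1"]) auto
    ultimately show ?thesis using summable_on_reindex_bij_betw by blast
  qed
  then show ?thesis by (simp add: g_def[abs_def])
qed

lemma main_cs: assumes "d \<ge> 1"
  shows "((\<lambda>n. Ek x (d - 1) n / (real n * (real n - x))) has_sum
           infsum (\<lambda>m. 1 / (real m ^ d * (real m - x))) {1..}) {1..}"
proof -
  define g where "g m = 1 / (real m ^ d * (real m - x))" for m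
  have gsum: "g summable_on {1..}" unfolding g_def by (rule g_summable[OF assms])
  define f where "f = (\<lambda>(m, n). Ek x (d - 1) n / (real n - x) * (Cn x n m / (real m - x)))"
  have inner_m: "((\<lambda>n. f (m, n)) has_sum g m) {1..}" if "m \<ge> 1" for m
  proof -
    have H: "((\<lambda>n. Ek x (d - 1) n * Cn x n m / (real n - x) * (1 / (real m - x))) has_sum
              (1 / real m ^ (d - 1 + 1) * (1 / (real m - x)))) {1..}"
      using that by (intro has_sum_cmult_left Kk) auto
    have e1: "1 / real m ^ (d - 1 + 1) * (1 / (real m - x)) = g m"
      using assms by (simp add: g_def)
    have e2: "Ek x (d - 1) n * Cn x n m / (real n - x) * (1 / (real m - x)) = f (m, n)" for n
      by (simp add: f_def)
    show ?thesis using H unfolding e1 e2 .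
  qed
  have inner_n: "((\<lambda>m. f (m, n)) has_sum (Ek x (d - 1) n / (real n * (real n - x)))) {1..}"
    if "n \<ge> 1" for n
  proof -
    have H: "((\<lambda>m. Ek x (d - 1) n / (real n - x) * (Cn x n m / (real m - x))) has_sum
            (Ek x (d - 1) n / (real n - x) * (1 / real n))) {1..}"
      using that by (intro has_sum_cmult_right T2) auto
    have e1: "Ek x (d - 1) n / (real n - x) * (1 / real n) = Ek x (d - 1) n / (real n * (real n - x))"
      by (simp add: mult.commute)
    show ?thesis using H unfolding e1 f_def prod.case .
  qed
  have "(f has_sum infsum g {1..}) (SIGMA m:{1..}. {1..})"
  proof (rule has_sum_Sigma_nonneg)
    show "f (m, n) \<ge> 0" if "m \<in> {1..}" "n \<in> {1..}" for m n
      using that x1 Cn_nonneg Ek_nonneg by (auto simp: f_def)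
    show "((\<lambda>n. f (m, n)) has_sum g m) {1..}" if "m \<in> {1..}" for m
      using that inner_m by auto
    show "(g has_sum infsum g {1..}) {1..}" using gsum by simp
  qed
  then have H2: "((\<lambda>(n, m). f (m, n)) has_sum infsum g {1..}) (SIGMA n:{1..}. {1..})"
    by (subst has_sum_reindex_bij_witness[where i="\<lambda>(m,n). (n,m)" and j="\<lambda>(n,m). (m,n)"
          and T="SIGMA m:{1..}. {1..}" and h=f]) auto
  have "((\<lambda>n. Ek x (d - 1) n / (real n * (real n - x))) has_sum infsum g {1..}) {1..}"
  proof (rule has_sum_SigmaD[OF H2])
    fix n :: nat assume "n \<in> {1..}"
    then show "((\<lambda>m. case (n, m) of (n, m) \<Rightarrow> f (m, n)) has_sum
                 Ek x (d - 1) n / (real n * (real n - x))) {1..}"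
      using inner_n by simp
  qed
  then show ?thesis unfolding g_def .
qed

end


definition DD :: "nat \<Rightarrow> nat list set" where
  "DD d = {ns. length ns = d \<and> sorted_wrt (>) ns \<and> (\<forall>x\<in>set ns. x \<ge> 1)}"

definition Dm :: "nat \<Rightarrow> nat \<Rightarrow> nat list set" where
  "Dm m p = {ns. length ns = p \<and> sorted_wrt (>) ns \<and> (\<forall>x\<in>set ns. 1 \<le> x \<and> x \<le> m)}"

definition tm :: "real \<Rightarrow> nat list \<Rightarrow> nat list \<Rightarrow> real" where
  "tm y a ns = (\<Prod>i<length a. (y / real (ns ! i)) ^ (a ! i))"

definition Pos :: "nat \<Rightarrow> nat list set" where
  "Pos k = {b. length b = k \<and> (\<forall>x\<in>set b. x \<ge> 1)}"

definition AA :: "nat \<Rightarrow> nat list set" where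
  "AA d = {a. length a = d \<and> (\<forall>x\<in>set a. x \<ge> 1) \<and> a \<noteq> [] \<and> hd a \<ge> 2}"

lemma DD_0 [simp]: "DD 0 = {[]}" by (auto simp: DD_def)
lemma Dm_0 [simp]: "Dm m 0 = {[]}" by (auto simp: Dm_def)
lemma Pos_0 [simp]: "Pos 0 = {[]}" by (auto simp: Pos_def)

lemma Cons_DD: "(n # ns) \<in> DD (Suc p) \<longleftrightarrow> n \<ge> 1 \<and> ns \<in> Dm (n - 1) p"
  by (auto simp: DD_def Dm_def)

lemma Cons_Dm: "(n # ns) \<in> Dm m (Suc p) \<longleftrightarrow> 1 \<le> n \<and> n \<le> m \<and> ns \<in> Dm (n - 1) p"
  by (auto simp: Dm_def)

lemma DD_Suc: "DD (Suc p) = {l. l \<noteq> [] \<and> hd l \<ge> 1 \<and> tl l \<in> Dm (hd l - 1) p}"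
proof -
  have "l \<in> DD (Suc p) \<longleftrightarrow> l \<noteq> [] \<and> hd l \<ge> 1 \<and> tl l \<in> Dm (hd l - 1) p" for l
    by (cases l) (auto simp: Cons_DD, auto simp: DD_def)
  then show ?thesis by auto
qed

lemma Dm_Suc: "Dm m (Suc p) = {l. l \<noteq> [] \<and> hd l \<in> {1..m} \<and> tl l \<in> Dm (hd l - 1) p}"
proof -
  have "l \<in> Dm m (Suc p) \<longleftrightarrow> l \<noteq> [] \<and> hd l \<in> {1..m} \<and> tl l \<in> Dm (hd l - 1) p" for l
    by (cases l) (auto simp: Cons_Dm, auto simp: Dm_def)
  then show ?thesis by auto
qed

lemma Pos_Suc: "Pos (Suc k) = {l. l \<noteq> [] \<and> hd l \<in> {1..} \<and> tl l \<in> Pos k}"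
proof -
  have "l \<in> Pos (Suc k) \<longleftrightarrow> l \<noteq> [] \<and> hd l \<in> {1..} \<and> tl l \<in> Pos k" for l
    by (cases l) (auto simp: Pos_def)
  then show ?thesis by auto
qed

lemma AA_Suc: "AA (Suc k) = {l. l \<noteq> [] \<and> hd l \<in> {2..} \<and> tl l \<in> Pos k}"
proof -
  have "l \<in> AA (Suc k) \<longleftrightarrow> l \<noteq> [] \<and> hd l \<in> {2..} \<and> tl l \<in> Pos k" for l
    by (cases l) (auto simp: Pos_def AA_def)
  then show ?thesis by auto
qed

lemma finite_Dm: "finite (Dm m p)"
proof -
  have "Dm m p \<subseteq> {ns. set ns \<subseteq> {1..m} \<and> length ns = p}" by (auto simp: Dm_def)
  moreover have "finite {ns. set ns \<subseteq> {1..m} \<and> length ns = p}"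
    by (rule finite_lists_length_eq) simp
  ultimately show ?thesis by (rule finite_subset)
qed

lemma tm_Cons: "tm y (a # as) (n # ns) = (y / real n) ^ a * tm y as ns"
  unfolding tm_def length_Cons prod.lessThan_Suc_shift by simp

lemma tm_Nil [simp]: "tm y [] ns = 1" by (simp add: tm_def)

lemma tm_scale: "tm y a ns = y ^ sum_list a * tm 1 a ns"
proof -
  have "tm y a ns = (\<Prod>i<length a. y ^ (a ! i) * (1 / real (ns ! i)) ^ (a ! i))"
    unfolding tm_def by (intro prod.cong refl) (simp add: power_mult_distrib[symmetric])
  also have "\<dots> = (\<Prod>i<length a. y ^ (a ! i)) * tm 1 a ns"
    unfolding tm_def by (rule prod.distrib)
  also have "(\<Prod>i<length a. y ^ (a ! i)) = y ^ (\<Sum>i<length a. a ! i)"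
    by (simp add: power_sum)
  also have "(\<Sum>i<length a. a ! i) = sum_list a"
    by (simp add: sum_list_sum_nth atLeast0LessThan)
  finally show ?thesis .
qed

lemma sum_cons_set:
  assumes "finite A" "\<And>a. a \<in> A \<Longrightarrow> finite (B a)"
  shows "(\<Sum>l\<in>{l. l \<noteq> [] \<and> hd l \<in> A \<and> tl l \<in> B (hd l)}. F l) = (\<Sum>a\<in>A. \<Sum>b\<in>B a. F (a # b))"
proof -
  have "{l. l \<noteq> [] \<and> hd l \<in> A \<and> tl l \<in> B (hd l)} = (\<lambda>(a, b). a # b) ` (SIGMA a:A. B a)"
    by (auto simp: image_iff intro!: bexI[where x="(hd l, tl l)" for l]) (metis list.collapse)
  moreover have "inj_on (\<lambda>(a, b). a # b) (SIGMA a:A. B a)" by (auto simp: inj_on_def)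
  ultimately show ?thesis using assms
    by (simp add: sum.reindex sum.Sigma case_prod_unfold)
qed

lemma has_sum_cons_set_iff:
  fixes F :: "'a list \<Rightarrow> real"
  assumes "\<And>a. a \<in> A \<Longrightarrow> finite (B a)"
    and "\<And>l. l \<noteq> [] \<Longrightarrow> hd l \<in> A \<Longrightarrow> tl l \<in> B (hd l) \<Longrightarrow> F l \<ge> 0"
  shows "(F has_sum S) {l. l \<noteq> [] \<and> hd l \<in> A \<and> tl l \<in> B (hd l)} \<longleftrightarrow>
         ((\<lambda>a. \<Sum>b\<in>B a. F (a # b)) has_sum S) A"
proof -
  have eq: "(F has_sum S) {l. l \<noteq> [] \<and> hd l \<in> A \<and> tl l \<in> B (hd l)} \<longleftrightarrow>
            ((\<lambda>(a, b). F (a # b)) has_sum S) (SIGMA a:A. B a)"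
    by (rule has_sum_reindex_bij_witness[where i="\<lambda>(a,b). a # b" and j="\<lambda>l. (hd l, tl l)"]) auto
  show ?thesis
  proof
    assume "(F has_sum S) {l. l \<noteq> [] \<and> hd l \<in> A \<and> tl l \<in> B (hd l)}"
    then have "((\<lambda>(a, b). F (a # b)) has_sum S) (SIGMA a:A. B a)" using eq by blast
    then show "((\<lambda>a. \<Sum>b\<in>B a. F (a # b)) has_sum S) A"
      by (rule has_sum_SigmaD) (use assms(1) in auto)
  next
    assume H: "((\<lambda>a. \<Sum>b\<in>B a. F (a # b)) has_sum S) A"
    have "((\<lambda>(a, b). F (a # b)) has_sum S) (SIGMA a:A. B a)"
      by (rule has_sum_Sigma_nonneg[OF _ _ H]) (use assms in auto)
    then show "(F has_sum S) {l. l \<noteq> [] \<and> hd l \<in> A \<and> tl l \<in> B (hd l)}" using eq by blast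
  qed
qed

lemma has_sum_cons_prod:
  fixes f :: "'a \<Rightarrow> real" and g :: "'a list \<Rightarrow> real"
  assumes "(f has_sum F) A" "(g has_sum G) B" "\<And>a. a \<in> A \<Longrightarrow> f a \<ge> 0" "\<And>b. b \<in> B \<Longrightarrow> g b \<ge> 0"
  shows "((\<lambda>l. f (hd l) * g (tl l)) has_sum (F * G)) {l. l \<noteq> [] \<and> hd l \<in> A \<and> tl l \<in> B}"
proof -
  have "((\<lambda>(a, b). f a * g b) has_sum F * G) (SIGMA a:A. B)"
    apply (rule has_sum_Sigma_nonneg[where g="\<lambda>a. f a * G"])
    using assms by (auto intro!: has_sum_cmult_right has_sum_cmult_left)
  moreover have "((\<lambda>l. f (hd l) * g (tl l)) has_sum (F * G)) {l. l \<noteq> [] \<and> hd l \<in> A \<and> tl l \<in> B}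
      \<longleftrightarrow> ((\<lambda>(a, b). f a * g b) has_sum F * G) (SIGMA a:A. B)"
    by (rule has_sum_reindex_bij_witness[where i="\<lambda>(a,b). a # b" and j="\<lambda>l. (hd l, tl l)"]) auto
  ultimately show ?thesis by blast
qed

lemma geom1: fixes q :: real assumes "0 \<le> q" "q < 1"
  shows "((\<lambda>b. q ^ b) has_sum q / (1 - q)) {1..}"
proof (rule sums_shift_has_sum)
  have "(\<lambda>k. q * q ^ k) sums (q * (1 / (1 - q)))"
    by (rule sums_mult) (rule geometric_sums, use assms in auto)
  then show "(\<lambda>k. q ^ (k + 1)) sums (q / (1 - q))" by (simp add: mult.commute)
  show "\<And>n. 1 \<le> n \<Longrightarrow> 0 \<le> q ^ n" using assms by simp
qed

lemma geomd: fixes q :: real assumes "0 \<le> q" "q < 1"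
  shows "((\<lambda>b. q ^ b) has_sum q ^ d / (1 - q)) {d..}"
proof (rule sums_shift_has_sum)
  have "(\<lambda>k. q ^ d * q ^ k) sums (q ^ d * (1 / (1 - q)))"
    by (rule sums_mult) (rule geometric_sums, use assms in auto)
  then show "(\<lambda>k. q ^ (k + d)) sums (q ^ d / (1 - q))" by (simp add: power_add mult.commute)
  show "\<And>n. d \<le> n \<Longrightarrow> 0 \<le> q ^ n" using assms by simp
qed

lemma tm_nonneg: "y \<ge> 0 \<Longrightarrow> tm y a ns \<ge> 0"
  unfolding tm_def by (intro prod_nonneg) auto

lemma Pos_expand:
  assumes "0 \<le> y" "\<forall>n\<in>set ns. real n > y"
  shows "((\<lambda>b. tm y b ns) has_sum (\<Prod>n\<leftarrow>ns. (y / real n) / (1 - y / real n))) (Pos (length ns))"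
  using assms(2)
proof (induction ns)
  case Nil
  show ?case by (rule has_sum_finiteI) simp_all
next
  case (Cons n ns)
  have q: "0 \<le> y / real n" "y / real n < 1" using Cons.prems assms(1) by auto
  have H: "((\<lambda>l. (y / real n) ^ hd l * tm y (tl l) ns) has_sum
          ((y / real n) / (1 - y / real n) * (\<Prod>n\<leftarrow>ns. (y / real n) / (1 - y / real n))))
          {l. l \<noteq> [] \<and> hd l \<in> {1..} \<and> tl l \<in> Pos (length ns)}"
    by (rule has_sum_cons_prod[OF geom1[OF q] Cons.IH]) (use Cons.prems assms(1) tm_nonneg q in auto)
  have e: "(\<Prod>n\<leftarrow>n # ns. y / real n / (1 - y / real n)) =
      (y / real n) / (1 - y / real n) * (\<Prod>n\<leftarrow>ns. (y / real n) / (1 - y / real n))" by simp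
  show ?case unfolding length_Cons e Pos_Suc
    using H by (rule has_sum_cong[THEN iffD1, rotated]) (auto simp: tm_Cons neq_Nil_conv)
qed

lemma AA_expand:
  assumes "0 \<le> y" "\<forall>n\<in>set (m # ns). real n > y"
  shows "((\<lambda>a. tm y a (m # ns)) has_sum
           ((y / real m) ^ 2 / (1 - y / real m) * (\<Prod>n\<leftarrow>ns. (y / real n) / (1 - y / real n))))
         (AA (Suc (length ns)))"
proof -
  have q: "0 \<le> y / real m" "y / real m < 1" using assms by auto
  have H: "((\<lambda>l. (y / real m) ^ hd l * tm y (tl l) ns) has_sum
          ((y / real m) ^ 2 / (1 - y / real m) * (\<Prod>n\<leftarrow>ns. (y / real n) / (1 - y / real n))))
          {l. l \<noteq> [] \<and> hd l \<in> {2..} \<and> tl l \<in> Pos (length ns)}"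
    by (rule has_sum_cons_prod[OF geomd[OF q, of 2] Pos_expand]) (use assms tm_nonneg q in auto)
  show ?thesis
    using H unfolding AA_Suc[symmetric]
    by (rule has_sum_cong[THEN iffD1, rotated]) (auto simp: tm_Cons AA_def neq_Nil_conv)
qed



lemma mzv_tm: "mzv a = infsum (\<lambda>ns. tm 1 a ns) (DD (length a))"
  unfolding mzv_def tm_def DD_def by (simp add: power_one_over)

lemma powser_unique_pos:
  fixes c c' :: "nat \<Rightarrow> real" and S :: "real \<Rightarrow> real"
  assumes r: "r > 0"
    and h: "\<And>y. 0 < y \<Longrightarrow> y \<le> r \<Longrightarrow> (\<lambda>w. c w * y ^ w) sums S y"
    and h': "\<And>y. 0 < y \<Longrightarrow> y \<le> r \<Longrightarrow> (\<lambda>w. c' w * y ^ w) sums S y"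
  shows "c = c'"
proof -
  define e where "e w = c w - c' w" for w
  have he: "(\<lambda>w. e w * y ^ w) sums 0" if "0 < y" "y \<le> r" for y
    using sums_diff[OF h[OF that] h'[OF that]] by (simp add: e_def algebra_simps)
  have "e k = 0" for k
  proof (induction k rule: less_induct)
    case (less k)
    have hk: "(\<lambda>w. e (w + k) * y ^ w) sums 0" if y: "0 < y" "y \<le> r" for y
    proof -
      have "(\<lambda>w. e (w + k) * y ^ (w + k)) sums (0 - (\<Sum>i<k. e i * y ^ i))"
        using sums_split_initial_segment[OF he[OF y], of k] by simp
      also have "(\<Sum>i<k. e i * y ^ i) = 0" using less by simp
      finally have "(\<lambda>w. (1 / y ^ k) * (e (w + k) * y ^ (w + k))) sums ((1 / y ^ k) * 0)"
        by (intro sums_mult) simp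
      moreover have "(1 / y ^ k) * (e (w + k) * y ^ (w + k)) = e (w + k) * y ^ w" for w
        using y by (simp add: power_add)
      ultimately show ?thesis by simp
    qed
    define G where "G y = (\<Sum>w. e (w + k) * y ^ w)" for y :: real
    have summ: "summable (\<lambda>w. e (w + k) * r ^ w)" using hk[OF r order.refl] by (simp add: sums_iff)
    have "isCont G 0" unfolding G_def by (rule isCont_powser[OF summ]) (use r in simp)
    then have lim: "(G \<longlongrightarrow> G 0) (at_right 0)"
      by (simp add: isCont_def filterlim_at_split)
    have G0: "G 0 = e k" unfolding G_def using powser_zero[of "\<lambda>w. e (w + k)"] by simp
    have "eventually (\<lambda>y. G y = 0) (at_right (0::real))"
      unfolding eventually_at_right[OF r]
      using hk r by (auto simp: G_def sums_iff intro!: exI[of _ r])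
    then have "(G \<longlongrightarrow> 0) (at_right 0)" by (rule tendsto_eventually)
    then show ?case using lim G0 tendsto_unique[OF trivial_limit_at_right_real] by metis
  qed
  then show ?thesis by (auto simp: e_def)
qed

definition Adm :: "nat \<Rightarrow> nat \<Rightarrow> nat list set" where
  "Adm w d = {a \<in> AA d. sum_list a = w}"

lemma finite_Adm: "finite (Adm w d)"
proof -
  have "Adm w d \<subseteq> {l. set l \<subseteq> {0..w} \<and> length l = d}"
    by (auto simp: Adm_def AA_def dest: member_le_sum_list)
  moreover have "finite {l. set l \<subseteq> {0..w} \<and> length l = d}"
    by (rule finite_lists_length_eq) simp
  ultimately show ?thesis by (rule finite_subset)
qed

context
  fixes x :: real
  assumes x0: "0 < x" and xh: "x \<le> 1/2"
begin

lemma Ek_list: "Ek x p n = (\<Sum>ms\<in>Dm (n - 1) p. \<Prod>m\<leftarrow>ms. 1 / (real m - x))"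
proof (induction p arbitrary: n)
  case 0 then show ?case by simp
next
  case (Suc p)
  have e: "{1..n - 1} = {1..<n}" by auto
  have "(\<Sum>ms\<in>Dm (n - 1) (Suc p). \<Prod>m\<leftarrow>ms. 1 / (real m - x))
      = (\<Sum>l\<in>{1..n-1}. \<Sum>ms\<in>Dm (l - 1) p. \<Prod>m\<leftarrow>l # ms. 1 / (real m - x))"
    unfolding Dm_Suc by (rule sum_cons_set) (auto simp: finite_Dm)
  also have "\<dots> = (\<Sum>l\<in>{1..<n}. Ek x p l / (real l - x))"
    unfolding e by (intro sum.cong refl) (simp add: Suc sum_divide_distrib)
  finally show ?case by simp
qed

definition Qv :: "nat list \<Rightarrow> real" where
  "Qv ns = (x / real (hd ns)) ^ 2 / (1 - x / real (hd ns)) *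
           (\<Prod>n\<leftarrow>tl ns. (x / real n) / (1 - x / real n))"

lemma Qv_group: assumes "m \<ge> 1"
  shows "(\<Sum>ms\<in>Dm (m - 1) p. Qv (m # ms)) = x ^ (Suc p + 1) * (Ek x p m / (real m * (real m - x)))"
proof -
  have mx: "real m - x > 0" "real m > 0" using assms xh by auto
  have a: "(x / real m) ^ 2 / (1 - x / real m) = x ^ 2 / (real m * (real m - x))"
    using mx by (simp add: field_simps power2_eq_square)
  have b: "(\<Prod>n\<leftarrow>ms. (x / real n) / (1 - x / real n)) = x ^ p * (\<Prod>n\<leftarrow>ms. 1 / (real n - x))"
    if "ms \<in> Dm (m - 1) p" for ms
  proof -
    have "length ms = p" "\<forall>n\<in>set ms. n \<ge> 1" using that by (auto simp: Dm_def)
    then show ?thesis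
    proof (induction ms arbitrary: p)
      case Nil then show ?case by simp
    next
      case (Cons n ms)
      then obtain p' where p': "p = Suc p'" by auto
      have n: "real n - x > 0" "real n > 0" using Cons.prems xh by auto
      have eq: "(x / real n) / (1 - x / real n) = x * (1 / (real n - x))"
        using n by (simp add: field_simps)
      have ih: "(\<Prod>n\<leftarrow>ms. (x / real n) / (1 - x / real n)) = x ^ p' * (\<Prod>n\<leftarrow>ms. 1 / (real n - x))"
        using Cons.IH[of p'] Cons.prems p' by simp
      show ?case unfolding list.map prod_list.Cons eq ih p' by (simp add: mult_ac)
    qed
  qed
  have "(\<Sum>ms\<in>Dm (m - 1) p. Qv (m # ms))
      = (\<Sum>ms\<in>Dm (m - 1) p. x ^ 2 / (real m * (real m - x)) * (x ^ p * (\<Prod>n\<leftarrow>ms. 1 / (real n - x))))"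
    by (intro sum.cong refl) (simp only: Qv_def list.sel a b)
  also have "\<dots> = x ^ 2 / (real m * (real m - x)) * x ^ p * Ek x p m"
    by (simp add: Ek_list sum_distrib_left mult.assoc)
  also have "\<dots> = x ^ (Suc p + 1) * (Ek x p m / (real m * (real m - x)))"
    by (simp add: power_add field_simps power2_eq_square)
  finally show ?thesis .
qed

lemma Qv_nonneg: "\<forall>n\<in>set ns. n \<ge> 1 \<Longrightarrow> ns \<noteq> [] \<Longrightarrow> Qv ns \<ge> 0"
proof -
  assume a: "\<forall>n\<in>set ns. n \<ge> 1" "ns \<noteq> []"
  have "\<forall>n\<in>set ns. real n > x" using a xh by force
  then have "\<forall>n\<in>set (tl ns). real n > x" using a by (cases ns) auto
  then have "\<forall>n\<in>set (tl ns). (x / real n) / (1 - x / real n) \<ge> 0"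
  proof (intro ballI)
    fix n assume "\<forall>n\<in>set (tl ns). real n > x" "n \<in> set (tl ns)"
    then have nx: "real n > x" by auto
    then have "x / real n < 1" using x0 by (simp add: divide_less_eq_1)
    then show "(x / real n) / (1 - x / real n) \<ge> 0" using x0 nx by (intro divide_nonneg_pos) auto
  qed
  then have "(\<Prod>n\<leftarrow>tl ns. (x / real n) / (1 - x / real n)) \<ge> 0"
    by (intro prod_list_nonneg) auto
  moreover have "real (hd ns) > x" using a xh by (cases ns) force+
  ultimately show ?thesis unfolding Qv_def using x0
    by (intro mult_nonneg_nonneg divide_nonneg_pos) auto
qed



lemma x0': "0 \<le> x" using x0 by simp

lemma Qv_hassum:
  "(Qv has_sum x ^ (Suc p + 1) * infsum (\<lambda>m. 1 / (real m ^ Suc p * (real m - x))) {1..}) (DD (Suc p))"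
proof -
  have e: "DD (Suc p) = {l. l \<noteq> [] \<and> hd l \<in> {1..} \<and> tl l \<in> Dm (hd l - 1) p}"
    unfolding DD_Suc by auto
  have H: "((\<lambda>n. x ^ (Suc p + 1) * (Ek x (Suc p - 1) n / (real n * (real n - x)))) has_sum
      x ^ (Suc p + 1) * infsum (\<lambda>m. 1 / (real m ^ Suc p * (real m - x))) {1..}) {1..}"
    by (rule has_sum_cmult_right[OF main_cs[OF x0' xh]]) simp
  show ?thesis unfolding e
  proof (subst has_sum_cons_set_iff)
    show "finite (Dm (a - 1) p)" for a by (rule finite_Dm)
    show "Qv l \<ge> 0" if "l \<noteq> []" "hd l \<in> {1..}" "tl l \<in> Dm (hd l - 1) p" for l
    proof (rule Qv_nonneg)
      show "l \<noteq> []" by fact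
      have "l = hd l # tl l" using that by simp
      moreover have "\<forall>n\<in>set (tl l). n \<ge> 1" using that by (auto simp: Dm_def)
      moreover have "set l = insert (hd l) (set (tl l))" using \<open>l \<noteq> []\<close>
        by (metis list.collapse list.simps(15))
      ultimately show "\<forall>n\<in>set l. n \<ge> 1" using that by auto
    qed
    show "((\<lambda>a. \<Sum>b\<in>Dm (a - 1) p. Qv (a # b)) has_sum
          x ^ (Suc p + 1) * infsum (\<lambda>m. 1 / (real m ^ Suc p * (real m - x))) {1..}) {1..}"
      using H by (rule has_sum_cong[THEN iffD1, rotated]) (subst Qv_group, auto)
  qed
qed

lemma pair_hassum:
  "((\<lambda>(ns, a). tm x a ns) has_sum x ^ (Suc p + 1) * infsum (\<lambda>m. 1 / (real m ^ Suc p * (real m - x))) {1..})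
     (SIGMA ns:DD (Suc p). AA (Suc p))"
proof (rule has_sum_Sigma_nonneg[OF _ _ Qv_hassum])
  show "0 \<le> (case (ns, a) of (ns, a) \<Rightarrow> tm x a ns)" for ns a using tm_nonneg x0' by simp
  show "((\<lambda>b. case (ns, b) of (ns, a) \<Rightarrow> tm x a ns) has_sum Qv ns) (AA (Suc p))"
    if "ns \<in> DD (Suc p)" for ns
  proof -
    have "ns \<noteq> []" using that by (auto simp: DD_def)
    then obtain m ms where ns: "ns = m # ms" by (auto simp: neq_Nil_conv)
    have len: "length ms = p" using that ns by (auto simp: DD_def)
    have "\<forall>n\<in>set (m # ms). real n > x" using that ns xh by (force simp: DD_def)
    from AA_expand[OF x0' this] show ?thesis unfolding ns len by (simp add: Qv_def)
  qed
qed

lemma pair_hassum2: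
  "((\<lambda>(a, ns). tm x a ns) has_sum x ^ (Suc p + 1) * infsum (\<lambda>m. 1 / (real m ^ Suc p * (real m - x))) {1..})
     (SIGMA a:AA (Suc p). DD (Suc p))"
  using pair_hassum
  by (subst has_sum_reindex_bij_witness[where i="\<lambda>(a,b). (b,a)" and j="\<lambda>(a,b). (b,a)"
          and T="SIGMA ns:DD (Suc p). AA (Suc p)" and h="\<lambda>(ns, a). tm x a ns"]) auto

lemma mzv_hassum_x: assumes "a \<in> AA (Suc p)"
  shows "((\<lambda>ns. tm 1 a ns) has_sum mzv a) (DD (Suc p))"
proof -
  have "(\<lambda>ns. tm x a ns) summable_on DD (Suc p)"
    using summable_on_SigmaD1[OF has_sum_imp_summable[OF pair_hassum2] assms] by simp
  then have "(\<lambda>ns. (1 / x ^ sum_list a) * tm x a ns) summable_on DD (Suc p)"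
    by (rule summable_on_cmult_right)
  moreover have "(1 / x ^ sum_list a) * tm x a ns = tm 1 a ns" for ns
    using x0 by (simp add: tm_scale[of x])
  ultimately have "(\<lambda>ns. tm 1 a ns) summable_on DD (Suc p)" by simp
  moreover have "length a = Suc p" using assms by (simp add: AA_def)
  ultimately show ?thesis by (simp add: mzv_tm)
qed


lemma L_series:
  "((\<lambda>w. (\<Sum>a\<in>Adm w (Suc p). mzv a) * x ^ w) has_sum
     x ^ (Suc p + 1) * infsum (\<lambda>m. 1 / (real m ^ Suc p * (real m - x))) {1..}) UNIV"
proof -
  let ?S = "x ^ (Suc p + 1) * infsum (\<lambda>m. 1 / (real m ^ Suc p * (real m - x))) {1..}"
  have A1: "((\<lambda>a. x ^ sum_list a * mzv a) has_sum ?S) (AA (Suc p))"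
  proof (rule has_sum_SigmaD[OF pair_hassum2])
    fix a assume "a \<in> AA (Suc p)"
    from has_sum_cmult_right[OF mzv_hassum_x[OF this], of "x ^ sum_list a"]
    show "((\<lambda>ns. case (a, ns) of (a, ns) \<Rightarrow> tm x a ns) has_sum x ^ sum_list a * mzv a) (DD (Suc p))"
      by (simp add: tm_scale[of x])
  qed
  have "((\<lambda>(w, a). x ^ sum_list a * mzv a) has_sum ?S) (SIGMA w:UNIV. Adm w (Suc p))"
    using A1
    by (subst has_sum_reindex_bij_witness[where j="\<lambda>(w,a). a" and i="\<lambda>a. (sum_list a, a)"
          and T="AA (Suc p)" and h="\<lambda>a. x ^ sum_list a * mzv a"]) (auto simp: Adm_def)
  then have "((\<lambda>w. \<Sum>a\<in>Adm w (Suc p). x ^ sum_list a * mzv a) has_sum ?S) UNIV"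
    by (rule has_sum_SigmaD) (auto simp: finite_Adm)
  moreover have "(\<Sum>a\<in>Adm w (Suc p). x ^ sum_list a * mzv a) = (\<Sum>a\<in>Adm w (Suc p). mzv a) * x ^ w" for w
  proof -
    have "(\<Sum>a\<in>Adm w (Suc p). x ^ sum_list a * mzv a) = (\<Sum>a\<in>Adm w (Suc p). mzv a * x ^ w)"
      by (intro sum.cong refl) (simp add: Adm_def)
    also have "\<dots> = (\<Sum>a\<in>Adm w (Suc p). mzv a) * x ^ w" by (simp add: sum_distrib_right)
    finally show ?thesis .
  qed
  ultimately show ?thesis by simp
qed

lemma mzv_single: "mzv [w] = infsum (\<lambda>m. (1 / real m) ^ w) {1..}"
proof -
  have "mzv [w] = infsum (\<lambda>ns. tm 1 [w] ns) (DD 1)" by (simp add: mzv_tm)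
  also have "\<dots> = infsum (\<lambda>m. (1 / real m) ^ w) {1..}"
  proof (rule infsum_reindex_bij_witness[where i="\<lambda>m. [m]" and j="\<lambda>ns. hd ns"])
    show "ns \<in> DD 1 \<Longrightarrow> [hd ns] = ns" for ns by (cases ns) (auto simp: DD_def)
    show "ns \<in> DD 1 \<Longrightarrow> (1 / real (hd ns)) ^ w = tm 1 [w] ns" for ns
      by (cases ns) (auto simp: DD_def tm_def)
    show "ns \<in> DD 1 \<Longrightarrow> hd ns \<in> {1..}" for ns
      by (cases ns) (auto simp: DD_def)
  qed (auto simp: DD_def)
  finally show ?thesis .
qed

lemma R_series:
  "((\<lambda>w. (if Suc p + 1 \<le> w then mzv [w] else 0) * x ^ w) has_sum
     x ^ (Suc p + 1) * infsum (\<lambda>m. 1 / (real m ^ Suc p * (real m - x))) {1..}) UNIV"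
proof -
  let ?S = "x ^ (Suc p + 1) * infsum (\<lambda>m. 1 / (real m ^ Suc p * (real m - x))) {1..}"
  have gs: "((\<lambda>m. x ^ (Suc p + 1) * (1 / (real m ^ Suc p * (real m - x)))) has_sum ?S) {1..}"
  proof (rule has_sum_cmult_right)
    have "(\<lambda>m. 1 / (real m ^ Suc p * (real m - x))) summable_on {1..}"
      by (rule g_summable[OF x0' xh]) simp
    then show "((\<lambda>m. 1 / (real m ^ Suc p * (real m - x))) has_sum
        infsum (\<lambda>m. 1 / (real m ^ Suc p * (real m - x))) {1..}) {1..}" by (rule has_sum_infsum)
  qed
  have P: "((\<lambda>(m, w). (x / real m) ^ w) has_sum ?S) (SIGMA m:{1..}. {Suc p + 1..})"
  proof (rule has_sum_Sigma_nonneg[OF _ _ gs])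
    show "0 \<le> (case (m, w) of (m, w) \<Rightarrow> (x / real m) ^ w)" for m w using x0 by simp
    show "((\<lambda>w. case (m, w) of (m, w) \<Rightarrow> (x / real m) ^ w) has_sum
            x ^ (Suc p + 1) * (1 / (real m ^ Suc p * (real m - x)))) {Suc p + 1..}"
      if "m \<in> {1..}" for m
    proof -
      have m: "real m > 0" "real m - x > 0" using that xh by auto
      have q: "0 \<le> x / real m" "x / real m < 1" using m x0 by auto
      have "(x / real m) ^ (Suc p + 1) / (1 - x / real m) = x ^ (Suc p + 1) * (1 / (real m ^ Suc p * (real m - x)))"
        using m by (simp add: field_simps power_add)
      with geomd[OF q, of "Suc p + 1"] show ?thesis by simp
    qed
  qed
  then have P2: "((\<lambda>(w, m). (x / real m) ^ w) has_sum ?S) (SIGMA w:{Suc p + 1..}. {1..})"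
    by (subst has_sum_reindex_bij_witness[where i="\<lambda>(a,b). (b,a)" and j="\<lambda>(a,b). (b,a)"
          and T="SIGMA m:{1..}. {Suc p + 1..}" and h="\<lambda>(m, w). (x / real m) ^ w"]) auto
  have inner: "((\<lambda>m. (x / real m) ^ w) has_sum x ^ w * mzv [w]) {1..}" if "w \<in> {Suc p + 1..}" for w
  proof -
    have "(\<lambda>m. (x / real m) ^ w) summable_on {1..}"
      using summable_on_SigmaD1[OF has_sum_imp_summable[OF P2] that] by simp
    then have "(\<lambda>m. (1 / x ^ w) * (x / real m) ^ w) summable_on {1..}"
      by (rule summable_on_cmult_right)
    moreover have "(1 / x ^ w) * (x / real m) ^ w = (1 / real m) ^ w" for m
      using x0 by (simp add: power_divide)
    ultimately have "(\<lambda>m. (1 / real m) ^ w) summable_on {1..}" by simp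
    then have "((\<lambda>m. (1 / real m) ^ w) has_sum mzv [w]) {1..}" by (simp add: mzv_single)
    from has_sum_cmult_right[OF this, of "x ^ w"] show ?thesis by (simp add: power_divide)
  qed
  have "((\<lambda>w. x ^ w * mzv [w]) has_sum ?S) {Suc p + 1..}"
    by (rule has_sum_SigmaD[OF P2]) (use inner in simp)
  then show ?thesis
    by (rule has_sum_cong_neutral[THEN iffD1, rotated -1]) auto
qed

end



theorem sum_formula:
  assumes "d \<ge> 1" "w \<ge> d + 1"
  shows "(\<Sum>a\<in>Adm w d. mzv a) = mzv [w]"
proof -
  obtain p where d: "d = Suc p" using assms by (cases d) auto
  define S where "S y = y ^ (Suc p + 1) * infsum (\<lambda>m. 1 / (real m ^ Suc p * (real m - y))) {1..}" for y :: real
  have "(\<lambda>w. \<Sum>a\<in>Adm w (Suc p). mzv a) = (\<lambda>w. if Suc p + 1 \<le> w then mzv [w] else 0)"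
  proof (rule powser_unique_pos[where r="1/2" and S=S])
    show "(\<lambda>w. (\<Sum>a\<in>Adm w (Suc p). mzv a) * y ^ w) sums S y" if "0 < y" "y \<le> 1/2" for y
      unfolding S_def by (rule has_sum_imp_sums) (rule L_series[OF that])
    show "(\<lambda>w. (if Suc p + 1 \<le> w then mzv [w] else 0) * y ^ w) sums S y" if "0 < y" "y \<le> 1/2" for y
      unfolding S_def by (rule has_sum_imp_sums) (rule R_series[OF that])
  qed simp
  from fun_cong[OF this, of w] assms show ?thesis by (simp add: d)
qed

lemma mzv_hassum:
  assumes "a \<in> AA d" "d \<ge> 1"
  shows "((\<lambda>ns. tm 1 a ns) has_sum mzv a) (DD d)"
proof -
  obtain p where d: "d = Suc p" using assms by (cases d) auto
  show ?thesis unfolding d by (rule mzv_hassum_x[where x="1/2"]) (use assms d in auto)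
qed

lemma has_sum_sum_fun:
  fixes f :: "'i \<Rightarrow> 'a \<Rightarrow> real"
  assumes "finite I" "\<And>i. i \<in> I \<Longrightarrow> (f i has_sum s i) A"
  shows "((\<lambda>x. \<Sum>i\<in>I. f i x) has_sum (\<Sum>i\<in>I. s i)) A"
  using assms
proof (induction I rule: finite_induct)
  case empty then show ?case by simp
next
  case (insert i I)
  then show ?case by (simp add: has_sum_add)
qed

section \<open>Symmetric functions\<close>

lemma esym_0j: "esym j 0 = (if j = 0 then 1 else 0)"
proof -
  have "{S. S \<subseteq> {1..0::nat} \<and> card S = j} = (if j = 0 then {{}} else {})" by auto
  then show ?thesis unfolding esym_def by simp
qed

lemma esym_j0: "esym 0 m = 1"
proof -
  have "{S. S \<subseteq> {1..m} \<and> card S = 0} = {{}}" by (auto dest: finite_subset)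
  then show ?thesis unfolding esym_def by simp
qed

lemma esym_Suc: "esym (Suc j) (Suc m) = esym (Suc j) m + esym j m / real (Suc m)"
proof -
  let ?A = "{S. S \<subseteq> {1..m} \<and> card S = Suc j}"
  let ?B = "{S. S \<subseteq> {1..m} \<and> card S = j}"
  have fin: "finite {S. S \<subseteq> {1..k}}" for k :: nat by simp
  have e: "{S. S \<subseteq> {1..Suc m} \<and> card S = Suc j} = ?A \<union> insert (Suc m) ` ?B"
  proof (intro equalityI subsetI)
    fix S assume "S \<in> {S. S \<subseteq> {1..Suc m} \<and> card S = Suc j}"
    then have S: "S \<subseteq> {1..Suc m}" "card S = Suc j" by auto
    show "S \<in> ?A \<union> insert (Suc m) ` ?B"
    proof (cases "Suc m \<in> S")
      case True
      have f: "finite S" using S(1) finite_subset by blast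
      have "S = insert (Suc m) (S - {Suc m})" using True by auto
      moreover have "S - {Suc m} \<in> ?B" using S f True by (auto simp: card_Diff_singleton)
      ultimately show ?thesis by blast
    next
      case False
      then have "S \<subseteq> {1..m}" using S by (auto simp: le_Suc_eq)
      then show ?thesis using S by auto
    qed
  next
    fix S assume "S \<in> ?A \<union> insert (Suc m) ` ?B"
    then show "S \<in> {S. S \<subseteq> {1..Suc m} \<and> card S = Suc j}"
    proof
      assume "S \<in> ?A" then show ?thesis by auto
    next
      assume "S \<in> insert (Suc m) ` ?B"
      then obtain T where T: "T \<subseteq> {1..m}" "card T = j" "S = insert (Suc m) T" by auto
      have "finite T" using T(1) finite_subset by blast
      moreover have "Suc m \<notin> T" using T(1) by auto
      ultimately show ?thesis using T by auto
    qed
  qed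
  have disj: "?A \<inter> insert (Suc m) ` ?B = {}" by auto
  have inj: "inj_on (insert (Suc m)) ?B"
  proof (rule inj_onI)
    fix S T assume a: "S \<in> ?B" "T \<in> ?B" "insert (Suc m) S = insert (Suc m) T"
    have "Suc m \<notin> S" "Suc m \<notin> T" using a(1,2) by auto
    then show "S = T" using a(3) by (metis Diff_insert_absorb)
  qed
  have finB: "finite ?B" by (rule finite_subset[of _ "Pow {1..m}"]) auto
  have finA: "finite ?A" by (rule finite_subset[of _ "Pow {1..m}"]) auto
  have finA': "finite (insert (Suc m) ` ?B)" using finB by simp
  have "esym (Suc j) (Suc m) = (\<Sum>S\<in>?A. \<Prod>r\<in>S. 1 / real r) + (\<Sum>S\<in>insert (Suc m) ` ?B. \<Prod>r\<in>S. 1 / real r)"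
    unfolding esym_def e using finA finA' disj by (rule sum.union_disjoint)
  also have "(\<Sum>S\<in>insert (Suc m) ` ?B. \<Prod>r\<in>S. 1 / real r) = (\<Sum>T\<in>?B. \<Prod>r\<in>insert (Suc m) T. 1 / real r)"
    using inj by (simp add: sum.reindex)
  also have "\<dots> = (\<Sum>T\<in>?B. (1 / real (Suc m)) * (\<Prod>r\<in>T. 1 / real r))"
  proof (intro sum.cong refl)
    fix T assume "T \<in> ?B"
    then have "finite T" "Suc m \<notin> T" by (auto intro: finite_subset)
    then show "(\<Prod>r\<in>insert (Suc m) T. 1 / real r) = (1 / real (Suc m)) * (\<Prod>r\<in>T. 1 / real r)"
      by (simp add: prod.insert)
  qed
  also have "\<dots> = esym j m / real (Suc m)" unfolding esym_def by (simp add: sum_divide_distrib)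
  finally show ?thesis unfolding esym_def by simp
qed

lemma hsym_eq: "hsym i m = (\<Sum>M\<in>multisets_of_size {1..m} i. \<Prod>r\<in>#M. 1 / real r)"
  unfolding hsym_def multisets_of_size_def ..

lemma hsym_0: "hsym i 0 = (if i = 0 then 1 else 0)"
  unfolding hsym_eq by (cases "i = 0") auto

lemma hsym_Suc: "hsym i (Suc m) = (\<Sum>t\<le>i. hsym (i - t) m * (1 / real (Suc m)) ^ t)"
proof -
  have ins: "{1..Suc m} = insert (Suc m) {1..m}" by auto
  have bij: "bij_betw (\<lambda>(t, X). X + replicate_mset t (Suc m))
      (SIGMA t:{0..i}. multisets_of_size {1..m} (i - t)) (multisets_of_size {1..Suc m} i)"
    unfolding ins by (rule bij_betw_multisets_of_size_insert) simp
  have fin: "finite (multisets_of_size {1..m} k)" for k by (rule finite_multisets_of_size) simp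
  have "hsym i (Suc m) = (\<Sum>M\<in>multisets_of_size {1..Suc m} i. \<Prod>r\<in>#M. 1 / real r)"
    by (rule hsym_eq)
  also have "\<dots> = (\<Sum>p\<in>(SIGMA t:{0..i}. multisets_of_size {1..m} (i - t)).
           \<Prod>r\<in>#((\<lambda>(t, X). X + replicate_mset t (Suc m)) p). 1 / real r)"
    by (rule sum.reindex_bij_betw[OF bij, symmetric])
  also have "\<dots> = (\<Sum>(t, X)\<in>(SIGMA t:{0..i}. multisets_of_size {1..m} (i - t)).
           (\<Prod>r\<in>#X. 1 / real r) * (1 / real (Suc m)) ^ t)"
    by (intro sum.cong refl) (clarsimp simp: mult.commute)
  also have "\<dots> = (\<Sum>t\<in>{0..i}. \<Sum>X\<in>multisets_of_size {1..m} (i - t).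
           (\<Prod>r\<in>#X. 1 / real r) * (1 / real (Suc m)) ^ t)"
    by (rule sum.Sigma[symmetric]) (auto simp: fin)
  also have "\<dots> = (\<Sum>t\<le>i. hsym (i - t) m * (1 / real (Suc m)) ^ t)"
    by (simp add: hsym_eq sum_distrib_right atLeast0AtMost)
  finally show ?thesis .
qed


section \<open>Compositions and the per-m identity\<close>

definition Comp :: "nat \<Rightarrow> nat \<Rightarrow> nat list set" where
  "Comp w p = {c. length c = p \<and> (\<forall>x\<in>set c. x \<ge> 1) \<and> sum_list c = w}"

lemma finite_Comp: "finite (Comp w p)"
proof -
  have "Comp w p \<subseteq> {l. set l \<subseteq> {0..w} \<and> length l = p}"
    by (auto simp: Comp_def dest: member_le_sum_list)
  moreover have "finite {l. set l \<subseteq> {0..w} \<and> length l = p}"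
    by (rule finite_lists_length_eq) simp
  ultimately show ?thesis by (rule finite_subset)
qed

lemma length_le_sum_list: "\<forall>x\<in>set c. x \<ge> (1::nat) \<Longrightarrow> length c \<le> sum_list c"
  by (induction c) auto

lemma Comp_empty: "w < p \<Longrightarrow> Comp w p = {}"
  using length_le_sum_list by (fastforce simp: Comp_def)

lemma Comp_0: "Comp w 0 = (if w = 0 then {[]} else {})"
  by (auto simp: Comp_def)

lemma Comp_Suc: "Comp w (Suc p) = {l. l \<noteq> [] \<and> hd l \<in> {1..w} \<and> tl l \<in> Comp (w - hd l) p}"
proof -
  have "l \<in> Comp w (Suc p) \<longleftrightarrow> l \<noteq> [] \<and> hd l \<in> {1..w} \<and> tl l \<in> Comp (w - hd l) p" for l
    by (cases l) (auto simp: Comp_def)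
  then show ?thesis by auto
qed

definition Phi :: "nat \<Rightarrow> nat \<Rightarrow> nat \<Rightarrow> real" where
  "Phi m p w = (\<Sum>ns\<in>Dm m p. \<Sum>c\<in>Comp w p. tm 1 c ns)"

definition HeadS :: "nat \<Rightarrow> nat \<Rightarrow> nat \<Rightarrow> real" where
  "HeadS m q w = (\<Sum>ms\<in>Dm m q. \<Sum>c\<in>Comp w (Suc q). tm 1 c (Suc m # ms))"

lemma sum_Dm_Suc_split:
  "(\<Sum>ns\<in>Dm (Suc m) (Suc q). F ns) = (\<Sum>ns\<in>Dm m (Suc q). F ns) + (\<Sum>ms\<in>Dm m q. F (Suc m # ms))"
proof -
  have ins: "{1..Suc m} = insert (Suc m) {1..m}" by auto
  have "(\<Sum>ns\<in>Dm (Suc m) (Suc q). F ns) = (\<Sum>l\<in>{1..Suc m}. \<Sum>ms\<in>Dm (l - 1) q. F (l # ms))"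
    unfolding Dm_Suc by (rule sum_cons_set) (auto simp: finite_Dm)
  also have "\<dots> = (\<Sum>ms\<in>Dm m q. F (Suc m # ms)) + (\<Sum>l\<in>{1..m}. \<Sum>ms\<in>Dm (l - 1) q. F (l # ms))"
    unfolding ins by (subst sum.insert) auto
  also have "(\<Sum>l\<in>{1..m}. \<Sum>ms\<in>Dm (l - 1) q. F (l # ms)) = (\<Sum>ns\<in>Dm m (Suc q). F ns)"
    unfolding Dm_Suc by (rule sum_cons_set[symmetric]) (auto simp: finite_Dm)
  finally show ?thesis by (metis add.commute)
qed

lemma Phi_Suc_Suc: "Phi (Suc m) (Suc q) w = Phi m (Suc q) w + HeadS m q w"
  unfolding Phi_def HeadS_def by (rule sum_Dm_Suc_split)

lemma Phi_Suc_0: "Phi (Suc m) 0 w = Phi m 0 w"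
  unfolding Phi_def by simp

lemma Dm_0_Suc: "Dm 0 (Suc q) = {}"
  by (auto simp: Dm_def) (metis le_zero_eq length_0_conv nat.distinct(1) nth_mem not_one_le_zero zero_less_Suc)

lemma Phi_0: "Phi 0 p w = (if p = 0 \<and> w = 0 then 1 else 0)"
  by (cases p) (auto simp: Phi_def Comp_0 Dm_0_Suc)

lemma Phi_zero: "w < p \<Longrightarrow> Phi m p w = 0"
  by (simp add: Phi_def Comp_empty)

lemma HeadS_eq: "HeadS m q w = (\<Sum>c\<in>{1..w}. (1 / real (Suc m)) ^ c * Phi m q (w - c))"
proof -
  have "HeadS m q w = (\<Sum>ms\<in>Dm m q. \<Sum>c\<in>{1..w}. \<Sum>c'\<in>Comp (w - c) q. tm 1 (c # c') (Suc m # ms))"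
    unfolding HeadS_def Comp_Suc by (intro sum.cong refl sum_cons_set) (auto simp: finite_Comp)
  also have "\<dots> = (\<Sum>ms\<in>Dm m q. \<Sum>c\<in>{1..w}. (1 / real (Suc m)) ^ c * (\<Sum>c'\<in>Comp (w - c) q. tm 1 c' ms))"
    by (simp add: tm_Cons sum_distrib_left)
  also have "\<dots> = (\<Sum>c\<in>{1..w}. (1 / real (Suc m)) ^ c * Phi m q (w - c))"
    unfolding Phi_def by (subst sum.swap) (simp add: sum_distrib_left)
  finally show ?thesis .
qed

definition Psi :: "nat \<Rightarrow> nat \<Rightarrow> nat \<Rightarrow> real" where
  "Psi m j w = (\<Sum>p\<le>w. real (p choose j) * Phi m p w)"

lemma Psi_ext: "v \<le> Q \<Longrightarrow> (\<Sum>p\<le>Q. real (p choose j) * Phi m p v) = Psi m j v"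
  unfolding Psi_def by (rule sum.mono_neutral_right) (auto simp: Phi_zero)

lemma Psi_zero: "v < j \<Longrightarrow> Psi m j v = 0"
  unfolding Psi_def by (intro sum.neutral) auto

lemma choose_Suc_split: "(Suc q choose j) = (q choose j) + (if j = 0 then 0 else q choose (j - 1))"
  by (cases j) auto

lemma Psi_Suc: "Psi (Suc m) j w = Psi m j w +
   (\<Sum>c\<in>{1..w}. (1 / real (Suc m)) ^ c * (Psi m j (w - c) + (if j = 0 then 0 else Psi m (j - 1) (w - c))))"
proof (cases w)
  case 0
  then show ?thesis by (simp add: Psi_def Phi_Suc_0)
next
  case (Suc w')
  let ?y = "1 / real (Suc m)"
  have "Psi (Suc m) j w = real (0 choose j) * Phi (Suc m) 0 w + (\<Sum>q\<le>w'. real (Suc q choose j) * Phi (Suc m) (Suc q) w)"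
    unfolding Psi_def Suc by (rule sum.atMost_Suc_shift)
  also have "\<dots> = (real (0 choose j) * Phi m 0 w + (\<Sum>q\<le>w'. real (Suc q choose j) * Phi m (Suc q) w))
       + (\<Sum>q\<le>w'. real (Suc q choose j) * HeadS m q w)"
    by (simp add: Phi_Suc_0 Phi_Suc_Suc algebra_simps sum.distrib)
  also have "real (0 choose j) * Phi m 0 w + (\<Sum>q\<le>w'. real (Suc q choose j) * Phi m (Suc q) w) = Psi m j w"
    unfolding Psi_def Suc by (rule sum.atMost_Suc_shift[symmetric])
  also have "(\<Sum>q\<le>w'. real (Suc q choose j) * HeadS m q w)
      = (\<Sum>c\<in>{1..w}. ?y ^ c * (\<Sum>q\<le>w'. real (Suc q choose j) * Phi m q (w - c)))"
    unfolding HeadS_eq by (simp add: sum_distrib_left sum_distrib_right sum.swap[of _ "{..w'}"] mult_ac)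
  also have "\<dots> = (\<Sum>c\<in>{1..w}. ?y ^ c * (Psi m j (w - c) + (if j = 0 then 0 else Psi m (j - 1) (w - c))))"
  proof (intro sum.cong refl)
    fix c assume c: "c \<in> {1..w}"
    then have le: "w - c \<le> w'" using Suc by auto
    have "(\<Sum>q\<le>w'. real (Suc q choose j) * Phi m q (w - c))
        = (\<Sum>q\<le>w'. real (q choose j) * Phi m q (w - c)) +
          (if j = 0 then 0 else (\<Sum>q\<le>w'. real (q choose (j - 1)) * Phi m q (w - c)))"
      by (simp add: choose_Suc_split algebra_simps sum.distrib)
    also have "\<dots> = Psi m j (w - c) + (if j = 0 then 0 else Psi m (j - 1) (w - c))"
      using le by (simp add: Psi_ext)
    finally show "?y ^ c * (\<Sum>q\<le>w'. real (Suc q choose j) * Phi m q (w - c)) =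
        ?y ^ c * (Psi m j (w - c) + (if j = 0 then 0 else Psi m (j - 1) (w - c)))" by simp
  qed
  finally show ?thesis .
qed


lemma sum_atMost_split0: fixes i :: nat shows "(\<Sum>t\<le>i. f t) = f 0 + (\<Sum>t\<in>{1..i}. f t)"
proof -
  have "{..i} = insert 0 {1..i}" by auto
  then show ?thesis by simp
qed

lemma sum_trunc:
  fixes M N :: nat and f :: "nat \<Rightarrow> 'a::comm_monoid_add"
  assumes "M \<le> N" "\<And>c. M < c \<Longrightarrow> c \<le> N \<Longrightarrow> f c = 0"
  shows "(\<Sum>c\<in>{1..N}. f c) = (\<Sum>c\<in>{1..M}. f c)"
  by (rule sum.mono_neutral_right) (use assms in auto)

lemma aux_alg: fixes a b h z :: real
  shows "(a + b * z) * (h * z ^ t) = (a * h) * z ^ t + (b * h) * z ^ Suc t"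
  by (simp add: algebra_simps)

lemma prod_eq: "esym j m * hsym i m = Psi m j (i + j)"
proof (induction m arbitrary: i j)
  case 0
  show ?case
  proof (cases "i = 0 \<and> j = 0")
    case True then show ?thesis by (simp add: esym_0j hsym_0 Psi_def Phi_0)
  next
    case False
    then have "Psi 0 j (i + j) = 0" by (auto simp: Psi_def Phi_0 intro!: sum.neutral)
    then show ?thesis using False by (auto simp: esym_0j hsym_0)
  qed
next
  case (Suc m)
  let ?y = "1 / real (Suc m)"
  show ?case
  proof (cases j)
    case 0
    have "esym j (Suc m) * hsym i (Suc m) = (\<Sum>t\<le>i. Psi m 0 (i - t) * ?y ^ t)"
    proof -
      have ih0: "hsym k m = Psi m 0 k" for k using Suc.IH[where j=0 and i=k] by (simp add: esym_j0)
      show ?thesis unfolding 0 esym_j0 hsym_Suc by (simp add: ih0)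
    qed
    also have "\<dots> = Psi m 0 i + (\<Sum>t\<in>{1..i}. Psi m 0 (i - t) * ?y ^ t)"
      by (subst sum_atMost_split0) simp
    also have "\<dots> = Psi (Suc m) j (i + j)"
      unfolding 0 Psi_Suc by (simp add: mult.commute)
    finally show ?thesis .
  next
    case (Suc j')
    define N where "N = i + Suc j'"
    have L: "esym j (Suc m) * hsym i (Suc m)
        = (\<Sum>t\<le>i. Psi m (Suc j') (i - t + Suc j') * ?y ^ t) + (\<Sum>t\<le>i. Psi m j' (i - t + j') * ?y ^ Suc t)"
    proof -
      have "esym j (Suc m) * hsym i (Suc m)
          = (\<Sum>t\<le>i. (esym (Suc j') m * hsym (i - t) m) * ?y ^ t) +
            (\<Sum>t\<le>i. (esym j' m * hsym (i - t) m) * ?y ^ Suc t)"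
      proof -
        have "esym j (Suc m) * hsym i (Suc m) =
            (\<Sum>t\<le>i. (esym (Suc j') m + esym j' m / real (Suc m)) * (hsym (i - t) m * ?y ^ t))"
          unfolding Suc esym_Suc hsym_Suc by (simp only: sum_distrib_left)
        also have "\<dots> = (\<Sum>t\<le>i. (esym (Suc j') m * hsym (i - t) m) * ?y ^ t +
                                  (esym j' m * hsym (i - t) m) * ?y ^ Suc t)"
          by (intro sum.cong refl, subst aux_alg[symmetric]) simp
        finally show ?thesis by (simp only: sum.distrib)
      qed
      then show ?thesis by (simp only: Suc.IH)
    qed
    have A: "(\<Sum>c\<in>{1..N}. ?y ^ c * Psi m (Suc j') (N - c)) = (\<Sum>t\<in>{1..i}. Psi m (Suc j') (i - t + Suc j') * ?y ^ t)"
    proof -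
      have "(\<Sum>c\<in>{1..N}. ?y ^ c * Psi m (Suc j') (N - c)) = (\<Sum>c\<in>{1..i}. ?y ^ c * Psi m (Suc j') (N - c))"
        by (rule sum_trunc) (auto simp: N_def Psi_zero)
      also have "\<dots> = (\<Sum>t\<in>{1..i}. Psi m (Suc j') (i - t + Suc j') * ?y ^ t)"
        by (intro sum.cong refl) (auto simp: N_def mult.commute Suc_diff_le)
      finally show ?thesis .
    qed
    have B: "(\<Sum>c\<in>{1..N}. ?y ^ c * Psi m j' (N - c)) = (\<Sum>t\<le>i. Psi m j' (i - t + j') * ?y ^ Suc t)"
    proof -
      have "(\<Sum>c\<in>{1..N}. ?y ^ c * Psi m j' (N - c)) = (\<Sum>c\<in>{1..Suc i}. ?y ^ c * Psi m j' (N - c))"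
        by (rule sum_trunc) (auto simp: N_def Psi_zero)
      also have "\<dots> = (\<Sum>t\<in>{0..i}. ?y ^ Suc t * Psi m j' (N - Suc t))"
        by (subst sum.shift_bounds_cl_Suc_ivl[symmetric]) simp
      also have "\<dots> = (\<Sum>t\<le>i. Psi m j' (i - t + j') * ?y ^ Suc t)"
        by (intro sum.cong) (auto simp: N_def mult.commute)
      finally show ?thesis .
    qed
    have "Psi (Suc m) j (i + j) = Psi m (Suc j') N +
        ((\<Sum>c\<in>{1..N}. ?y ^ c * Psi m (Suc j') (N - c)) + (\<Sum>c\<in>{1..N}. ?y ^ c * Psi m j' (N - c)))"
      unfolding Psi_Suc Suc N_def by (simp add: distrib_left sum.distrib)
    also have "\<dots> = esym j (Suc m) * hsym i (Suc m)"
      unfolding A B L by (subst sum_atMost_split0) (simp add: N_def)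
    finally show ?thesis by simp
  qed
qed



definition S3 :: "nat \<Rightarrow> nat \<Rightarrow> nat list set" where
  "S3 N d = {a. length a = d \<and> (\<forall>x\<in>set a. x \<ge> 1) \<and> sum_list a = N \<and> a \<noteq> [] \<and> hd a \<ge> 3}"

definition S2set :: "nat \<Rightarrow> nat \<Rightarrow> nat list set" where
  "S2set N d = {a \<in> Adm N d. hd a = 2}"

definition S2 :: "nat \<Rightarrow> nat \<Rightarrow> real" where
  "S2 N d = (\<Sum>a\<in>S2set N d. mzv a)"

lemma ST_S3: "ST N d = (\<Sum>a\<in>S3 N d. mzv a)"
  unfolding ST_def S3_def ..

lemma finite_S3: "finite (S3 N d)"
proof -
  have "S3 N d \<subseteq> Adm N d" by (auto simp: S3_def Adm_def AA_def)
  then show ?thesis using finite_Adm finite_subset by blast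
qed

lemma finite_S2set: "finite (S2set N d)"
  using finite_Adm by (auto simp: S2set_def)

lemma ST_S2: assumes "d \<ge> 1" "d + 1 \<le> N" shows "ST N d + S2 N d = mzv [N]"
proof -
  have e: "Adm N d = S3 N d \<union> S2set N d" by (auto simp: Adm_def AA_def S3_def S2set_def)
  have disj: "S3 N d \<inter> S2set N d = {}" by (auto simp: S3_def S2set_def)
  have "ST N d + S2 N d = (\<Sum>a\<in>Adm N d. mzv a)"
    unfolding ST_S3 S2_def e by (rule sum.union_disjoint[symmetric]) (auto simp: finite_S3 finite_S2set disj)
  also have "\<dots> = mzv [N]" using assms by (intro sum_formula) auto
  finally show ?thesis .
qed

lemma DD_Suc': "DD (Suc q) = {l. l \<noteq> [] \<and> hd l \<in> {1..} \<and> tl l \<in> Dm (hd l - 1) q}"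
  unfolding DD_Suc by auto

lemma DD_nonneg: "ns \<in> DD d \<Longrightarrow> (\<Sum>a\<in>A. tm 1 a ns) \<ge> 0"
  by (intro sum_nonneg tm_nonneg) simp

lemma E1: "((\<lambda>m. HeadS (m - 1) q n / real m ^ 2) has_sum ST (n + 2) (Suc q)) {1..}"
proof -
  have H: "((\<lambda>ns. \<Sum>a\<in>S3 (n + 2) (Suc q). tm 1 a ns) has_sum ST (n + 2) (Suc q)) (DD (Suc q))"
    unfolding ST_S3
  proof (rule has_sum_sum_fun[OF finite_S3])
    fix a assume "a \<in> S3 (n + 2) (Suc q)"
    then have "a \<in> AA (Suc q)" by (auto simp: S3_def AA_def)
    then show "((\<lambda>ns. tm 1 a ns) has_sum mzv a) (DD (Suc q))" by (rule mzv_hassum) simp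
  qed
  have G: "((\<lambda>m. \<Sum>ms\<in>Dm (m - 1) q. \<Sum>a\<in>S3 (n + 2) (Suc q). tm 1 a (m # ms)) has_sum ST (n + 2) (Suc q)) {1..}"
    using H unfolding DD_Suc' by (subst (asm) has_sum_cons_set_iff) (auto simp: finite_Dm intro!: sum_nonneg tm_nonneg)
  have eq: "(\<Sum>ms\<in>Dm (m - 1) q. \<Sum>a\<in>S3 (n + 2) (Suc q). tm 1 a (m # ms)) = HeadS (m - 1) q n / real m ^ 2"
    if "m \<ge> 1" for m
  proof -
    have Sm: "Suc (m - 1) = m" using that by simp
    have "(\<Sum>a\<in>S3 (n + 2) (Suc q). tm 1 a (m # ms)) = (\<Sum>c\<in>Comp n (Suc q). (1 / real m) ^ 2 * tm 1 c (m # ms))" for ms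
    proof (rule sum.reindex_bij_witness[where i="\<lambda>c. (hd c + 2) # tl c" and j="\<lambda>a. (hd a - 2) # tl a"])
      fix a assume a: "a \<in> S3 (n + 2) (Suc q)"
      then obtain a0 as where a0: "a = a0 # as" "a0 \<ge> 3" by (auto simp: S3_def neq_Nil_conv)
      show "(hd ((hd a - 2) # tl a) + 2) # tl ((hd a - 2) # tl a) = a" using a0 by simp
      show "(hd a - 2) # tl a \<in> Comp n (Suc q)" using a a0 by (auto simp: S3_def Comp_def)
      have pw: "(1 / real m) ^ 2 * (1 / real m) ^ (a0 - 2) = (1 / real m) ^ a0"
      proof -
        have "a0 = 2 + (a0 - 2)" using a0 by simp
        then show ?thesis by (metis power_add)
      qed
      show "(1 / real m) ^ 2 * tm 1 ((hd a - 2) # tl a) (m # ms) = tm 1 a (m # ms)"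
        by (simp only: a0(1) list.sel tm_Cons mult.assoc[symmetric] pw)
    next
      fix c assume c: "c \<in> Comp n (Suc q)"
      have "c \<noteq> []" using c by (auto simp: Comp_def)
      then obtain c0 cs where c0: "c = c0 # cs" by (auto simp: neq_Nil_conv)
      show "(hd ((hd c + 2) # tl c) - 2) # tl ((hd c + 2) # tl c) = c" using c0 by simp
      show "(hd c + 2) # tl c \<in> S3 (n + 2) (Suc q)" using c c0 by (auto simp: S3_def Comp_def)
    qed
    then have "(\<Sum>ms\<in>Dm (m - 1) q. \<Sum>a\<in>S3 (n + 2) (Suc q). tm 1 a (m # ms))
        = (1 / real m) ^ 2 * (\<Sum>ms\<in>Dm (m - 1) q. \<Sum>c\<in>Comp n (Suc q). tm 1 c (m # ms))"
      by (simp add: sum_distrib_left)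
    also have "\<dots> = HeadS (m - 1) q n / real m ^ 2"
      unfolding HeadS_def Sm by (simp add: power_one_over)
    finally show ?thesis .
  qed
  show ?thesis using G by (rule has_sum_cong[THEN iffD1, rotated]) (rule eq, simp)
qed

lemma E2: "((\<lambda>m. Phi (m - 1) p n / real m ^ 2) has_sum S2 (n + 2) (Suc p)) {1..}"
proof -
  have H: "((\<lambda>ns. \<Sum>a\<in>S2set (n + 2) (Suc p). tm 1 a ns) has_sum S2 (n + 2) (Suc p)) (DD (Suc p))"
    unfolding S2_def
  proof (rule has_sum_sum_fun[OF finite_S2set])
    fix a assume "a \<in> S2set (n + 2) (Suc p)"
    then have "a \<in> AA (Suc p)" by (auto simp: S2set_def Adm_def)
    then show "((\<lambda>ns. tm 1 a ns) has_sum mzv a) (DD (Suc p))" by (rule mzv_hassum) simp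
  qed
  have G: "((\<lambda>m. \<Sum>ms\<in>Dm (m - 1) p. \<Sum>a\<in>S2set (n + 2) (Suc p). tm 1 a (m # ms)) has_sum S2 (n + 2) (Suc p)) {1..}"
    using H unfolding DD_Suc' by (subst (asm) has_sum_cons_set_iff) (auto simp: finite_Dm intro!: sum_nonneg tm_nonneg)
  have eq: "(\<Sum>ms\<in>Dm (m - 1) p. \<Sum>a\<in>S2set (n + 2) (Suc p). tm 1 a (m # ms)) = Phi (m - 1) p n / real m ^ 2"
    for m
  proof -
    have "(\<Sum>a\<in>S2set (n + 2) (Suc p). tm 1 a (m # ms)) = (\<Sum>c\<in>Comp n p. (1 / real m) ^ 2 * tm 1 c ms)" for ms
    proof (rule sum.reindex_bij_witness[where i="\<lambda>c. 2 # c" and j="\<lambda>a. tl a"])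
      fix a assume a: "a \<in> S2set (n + 2) (Suc p)"
      then obtain as where a0: "a = 2 # as" by (auto simp: S2set_def Adm_def AA_def neq_Nil_conv)
      show "2 # tl a = a" using a0 by simp
      show "tl a \<in> Comp n p" using a a0 by (auto simp: S2set_def Adm_def AA_def Comp_def)
      show "(1 / real m) ^ 2 * tm 1 (tl a) ms = tm 1 a (m # ms)"
        using a0 by (simp add: tm_Cons)
    next
      fix c assume c: "c \<in> Comp n p"
      show "tl (2 # c) = c" by simp
      show "2 # c \<in> S2set (n + 2) (Suc p)" using c by (auto simp: S2set_def Adm_def AA_def Comp_def)
    qed
    then have "(\<Sum>ms\<in>Dm (m - 1) p. \<Sum>a\<in>S2set (n + 2) (Suc p). tm 1 a (m # ms))
        = (1 / real m) ^ 2 * (\<Sum>ms\<in>Dm (m - 1) p. \<Sum>c\<in>Comp n p. tm 1 c ms)"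
      by (simp add: sum_distrib_left)
    also have "\<dots> = Phi (m - 1) p n / real m ^ 2"
      unfolding Phi_def by (simp add: power_one_over)
    finally show ?thesis .
  qed
  show ?thesis using G by (rule has_sum_cong[THEN iffD1, rotated]) (rule eq)
qed



lemma E3:
  assumes "m \<ge> 1" "n \<ge> 1" "j \<le> n"
  shows "esym j m * hsym (n - j) m / real m ^ 2 =
    (\<Sum>p\<in>{1..n}. real (p choose j) * (HeadS (m - 1) (p - 1) n / real m ^ 2 + Phi (m - 1) p n / real m ^ 2))"
proof -
  have "esym j m * hsym (n - j) m = Psi m j n" using prod_eq[of j m "n - j"] assms by simp
  also have "\<dots> = real (0 choose j) * Phi m 0 n + (\<Sum>p\<in>{1..n}. real (p choose j) * Phi m p n)"
    unfolding Psi_def by (rule sum_atMost_split0)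
  also have "Phi m 0 n = 0" using assms by (simp add: Phi_def Comp_0)
  also have "(\<Sum>p\<in>{1..n}. real (p choose j) * Phi m p n)
      = (\<Sum>p\<in>{1..n}. real (p choose j) * (HeadS (m - 1) (p - 1) n + Phi (m - 1) p n))"
  proof (intro sum.cong refl)
    fix p assume "p \<in> {1..n}"
    then have "Phi m p n = Phi (Suc (m - 1)) (Suc (p - 1)) n" using assms by simp
    also have "\<dots> = Phi (m - 1) p n + HeadS (m - 1) (p - 1) n"
    proof -
      have e: "Suc (p - 1) = p" using \<open>p \<in> {1..n}\<close> by simp
      show ?thesis using Phi_Suc_Suc[of "m - 1" "p - 1" n] unfolding e .
    qed
    finally show "real (p choose j) * Phi m p n = real (p choose j) * (HeadS (m - 1) (p - 1) n + Phi (m - 1) p n)"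
      by simp
  qed
  finally have e1: "esym j m * hsym (n - j) m =
      (\<Sum>p\<in>{1..n}. real (p choose j) * (HeadS (m - 1) (p - 1) n + Phi (m - 1) p n))" by simp
  show ?thesis unfolding e1 sum_divide_distrib
    by (intro sum.cong refl) (simp add: distrib_left add_divide_distrib)
qed

lemma alg1:
  fixes T :: "nat \<Rightarrow> real"
  assumes "j \<ge> 1"
  shows "(\<Sum>p\<in>{1..n}. real (p choose j) * (T p - T (Suc p)))
       = (\<Sum>p\<in>{1..n}. real ((p - 1) choose (j - 1)) * T p) - real (n choose j) * T (Suc n)"
proof (induction n)
  case 0 then show ?case using assms by simp
next
  case (Suc n)
  have c: "real (Suc n choose j) = real (n choose j) + real (n choose (j - 1))"
    using assms by (simp add: choose_Suc_split)
  show ?case using Suc by (simp add: c algebra_simps)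
qed

lemma alg0:
  fixes T :: "nat \<Rightarrow> real"
  shows "(\<Sum>p\<in>{1..n}. T p - T (Suc p)) = T 1 - T (Suc n)"
  by (induction n) simp_all

lemma ST_1: assumes "n \<ge> 1" shows "ST (n + 2) 1 = mzv [n + 2]"
proof -
  have "{a. length a = 1 \<and> (\<forall>x\<in>set a. x \<ge> 1) \<and> sum_list a = n + 2 \<and> a \<noteq> [] \<and> hd a \<ge> 3} = {[n + 2]}"
    using assms by (auto simp: length_Suc_conv)
  then show ?thesis unfolding ST_def by simp
qed

lemma ST_top: "ST (n + 2) (Suc n) = 0"
proof -
  have e: "{a. length a = Suc n \<and> (\<forall>x\<in>set a. x \<ge> 1) \<and> sum_list a = n + 2 \<and> a \<noteq> [] \<and> hd a \<ge> 3} = {}"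
  proof (safe)
    fix a assume a: "length a = Suc n" "\<forall>x\<in>set a. x \<ge> 1" "sum_list a = n + 2" "a \<noteq> []" "hd a \<ge> 3"
    then obtain a0 as where a0: "a = a0 # as" by (auto simp: neq_Nil_conv)
    have "length as \<le> sum_list as" using a a0 by (intro length_le_sum_list) auto
    then show "a \<in> {}" using a a0 by simp
  qed
  show ?thesis unfolding ST_def e by simp
qed

theorem mainTheorem12:
  fixes n j :: nat
  assumes "n \<ge> 1" and "j \<le> n"
  shows "((\<lambda>m. esym j m * hsym (n - j) m / (real m)^2) has_sum
           (if j = 0 then real (n + 1) * mzv [n + 2]
            else (\<Sum>p=j..n. real ((p - 1) choose (j - 1)) * ST (n + 2) p)
                 + real ((n + 1) choose (j + 1)) * mzv [n + 2])) {1..}"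
proof -
  define X where "X = (\<Sum>p\<in>{1..n}. real (p choose j) * (ST (n + 2) p + S2 (n + 2) (Suc p)))"
  have H: "((\<lambda>m. \<Sum>p\<in>{1..n}. real (p choose j) * (HeadS (m - 1) (p - 1) n / real m ^ 2 + Phi (m - 1) p n / real m ^ 2))
      has_sum X) {1..}"
    unfolding X_def
  proof (rule has_sum_sum_fun)
    fix p assume p: "p \<in> {1..n}"
    have "((\<lambda>m. HeadS (m - 1) (p - 1) n / real m ^ 2 + Phi (m - 1) p n / real m ^ 2) has_sum
           (ST (n + 2) (Suc (p - 1)) + S2 (n + 2) (Suc p))) {1..}"
      by (intro has_sum_add E1 E2)
    then show "((\<lambda>m. real (p choose j) * (HeadS (m - 1) (p - 1) n / real m ^ 2 + Phi (m - 1) p n / real m ^ 2))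
        has_sum real (p choose j) * (ST (n + 2) p + S2 (n + 2) (Suc p))) {1..}"
      using p by (intro has_sum_cmult_right) simp
  qed simp
  have H2: "((\<lambda>m. esym j m * hsym (n - j) m / (real m)^2) has_sum X) {1..}"
    using H by (rule has_sum_cong[THEN iffD1, rotated]) (rule E3[symmetric], use assms in auto)
  define T where "T p = ST (n + 2) p" for p
  define z where "z = mzv [n + 2]"
  have S2e: "S2 (n + 2) (Suc p) = z - T (Suc p)" if "p \<in> {1..n}" for p
    using ST_S2[of "Suc p" "n + 2"] that by (simp add: T_def z_def)
  have X2: "X = (\<Sum>p\<in>{1..n}. real (p choose j) * (T p - T (Suc p))) + z * (\<Sum>p\<in>{1..n}. real (p choose j))"
  proof -
    have "X = (\<Sum>p\<in>{1..n}. real (p choose j) * (T p - T (Suc p)) + z * real (p choose j))"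
      unfolding X_def
    proof (intro sum.cong refl)
      fix p assume p: "p \<in> {1..n}"
      show "real (p choose j) * (ST (n + 2) p + S2 (n + 2) (Suc p)) =
          real (p choose j) * (T p - T (Suc p)) + z * real (p choose j)"
        by (simp only: S2e[OF p] T_def) (simp add: algebra_simps)
    qed
    then show ?thesis by (simp add: sum.distrib sum_distrib_left)
  qed
  have Ttop: "T (Suc n) = 0" unfolding T_def by (rule ST_top)
  have T1: "T 1 = z" unfolding T_def z_def using ST_1[OF assms(1)] by simp
  show ?thesis
  proof (cases "j = 0")
    case True
    have "X = z + z * real n" unfolding X2 True using alg0[where n=n and T=T] Ttop T1 by simp
    then have "X = real (n + 1) * z" by (simp add: algebra_simps)
    then show ?thesis using H2 True by (simp add: z_def)
  next
    case False
    then have j1: "j \<ge> 1" by simp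
    have s1: "(\<Sum>p\<in>{1..n}. real (p choose j) * (T p - T (Suc p)))
        = (\<Sum>p\<in>{j..n}. real ((p - 1) choose (j - 1)) * T p)"
    proof -
      have "(\<Sum>p\<in>{1..n}. real (p choose j) * (T p - T (Suc p)))
          = (\<Sum>p\<in>{1..n}. real ((p - 1) choose (j - 1)) * T p)"
        using alg1[OF j1, where n=n and T=T] Ttop by simp
      also have "\<dots> = (\<Sum>p\<in>{j..n}. real ((p - 1) choose (j - 1)) * T p)"
        by (rule sum.mono_neutral_right) (use j1 in auto)
      finally show ?thesis .
    qed
    have s2: "(\<Sum>p\<in>{1..n}. real (p choose j)) = real ((n + 1) choose (j + 1))"
    proof -
      have "(\<Sum>p\<le>n. real (p choose j)) = real (0 choose j) + (\<Sum>p\<in>{1..n}. real (p choose j))"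
        by (rule sum_atMost_split0)
      moreover have "(\<Sum>p\<le>n. real (p choose j)) = real (Suc n choose Suc j)"
        using sum_choose_upper[of j n] by (metis of_nat_sum)
      ultimately show ?thesis using j1 by simp
    qed
    have "X = (\<Sum>p\<in>{j..n}. real ((p - 1) choose (j - 1)) * ST (n + 2) p) + real ((n + 1) choose (j + 1)) * mzv [n + 2]"
      unfolding X2 s1 s2 by (simp add: T_def z_def mult.commute)
    then show ?thesis using H2 False by simp
  qed
qed


end
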